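(* Let $M\in\mathbb Z_{\geq0}$ and $v_0,\dots,v_M\in\mathcal V$ with $v_0<v_1<\dots<v_M$ and $v_{i+1}\in\pi(\Psi(v_i))$ for all $i\in\{0,\dots,M-1\}$. Then $M\leq (n+1)\frac{v_M+\mu_\kappa}{\tau}+h(v_M)$.
   Context: Let $\mathbf K$ be a field and $\ell\geq 2$ an integer. Let $L=a_n\phi_\ell^n+\dots+a_0$ with $n\geq1$, $a_i\in\mathbf K[z]$, $a_0a_n\neq0$, where $\phi_\ell(f)(z)=f(z^\ell)$ acting on Hahn series with coefficients in $\mathbf K$ and value group $\mathbb Q$. Let $\mathcal P(L)=\{(\ell^i,j): 0\le i\le n,\ j\in\operatorname{supp} a_i\}$. The Newton polygon of $L$ is the convex hull of $\{(\ell^i,j): 0\le i\le n,\ j\geq\operatorname{val} a_i\}\subset\mathbb R^2$; its non-vertical edges have slopes $\mu_1<\dots<\mu_\kappa$, $\mathcal S(L)=\{\mu_1,\dots,\mu_\kappa\}$. Let $d\geq1$ be a common multiple of the denominators of the $\mu_k$; $\mathbb Z_{d,\ell}=\bigcup_{i\geq0}\frac{1}{d\ell^i}\mathbb Z$, and $h(v)=\min\{i\geq0: v\in\frac1{d\ell^i}\mathbb Z\}$ for $v\in\mathbb Z_{d,\ell}$. Define $\Psi(v)=\{v\ell^i+j:(\ell^i,j)\in\mathcal P(L)\}$, $\pi(q)=\max\{(q-j)/\ell^i:(\ell^i,j)\in\mathcal P(L)\}$. Let $\mathcal V_0=-\mathcal S(L)$, $\mathcal V_{i+1}=\bigcup_{v\in\mathcal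 V_i}\pi(\Psi(v))$, $\mathcal V=\bigcup_{i\ge0}\mathcal V_i$ (a well-ordered subset of $\mathbb Z_{d,\ell}$). For $v\in\mathbb Q$ let $\epsilon(v)=\min\{w\in\mathcal V: w>v\}-v\in\mathbb Q_{>0}\cup\{+\infty\}$ ($+\infty$ if this set is empty), and $\tau=\min\{\epsilon(-\mu_1),\dots,\epsilon(-\mu_\kappa),(d\ell^n)^{-1}\}\in\mathbb Q_{>0}$. *)

theory Defs
  imports "HOL-Analysis.Analysis" "HOL-Computational_Algebra.Polynomial"
begin

text \<open>The operator L = a_n phi_l^n + ... + a_0 is represented by the coefficient
  family a :: nat => 'a poly (only a 0, ..., a n matter), together with l and n.\<close>

definition psupp :: "'a::zero poly \<Rightarrow> nat set" where
  "psupp p = {j. coeff p j \<noteq> 0}"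

definition pval :: "'a::zero poly \<Rightarrow> nat" where
  "pval p = (LEAST j. coeff p j \<noteq> 0)"

definition ptsL :: "nat \<Rightarrow> nat \<Rightarrow> (nat \<Rightarrow> 'a::zero poly) \<Rightarrow> (real \<times> real) set" where
  "ptsL l n a = {(real l ^ i, real j) | i j. i \<le> n \<and> j \<in> psupp (a i)}"

text \<open>Newton polygon: convex hull of {(l^i, j) : 0 <= i <= n, j >= val a_i} in R^2
  (val 0 = +infinity, so a_i = 0 contributes no points).\<close>
definition newton_polygon :: "nat \<Rightarrow> nat \<Rightarrow> (nat \<Rightarrow> 'a::zero poly) \<Rightarrow> (real \<times> real) set" where
  "newton_polygon l n a =
     convex hull {(real l ^ i, y) | i y. i \<le> n \<and> a i \<noteq> 0 \<and> real (pval (a i)) \<le> y}"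

definition slopesL :: "nat \<Rightarrow> nat \<Rightarrow> (nat \<Rightarrow> 'a::zero poly) \<Rightarrow> real set" where
  "slopesL l n a = {\<mu>. \<exists>F. F face_of newton_polygon l n a \<and> aff_dim F = 1 \<and>
      (\<exists>p\<in>F. \<exists>q\<in>F. fst p < fst q \<and> \<mu> = (snd q - snd p) / (fst q - fst p))}"

definition PsiL :: "nat \<Rightarrow> nat \<Rightarrow> (nat \<Rightarrow> 'a::zero poly) \<Rightarrow> real \<Rightarrow> real set" where
  "PsiL l n a v = {v * x + j | x j. (x, j) \<in> ptsL l n a}"

definition piL :: "nat \<Rightarrow> nat \<Rightarrow> (nat \<Rightarrow> 'a::zero poly) \<Rightarrow> real \<Rightarrow> real" where
  "piL l n a q = Max {(q - j) / x | x j. (x, j) \<in> ptsL l n a}"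

fun VL :: "nat \<Rightarrow> nat \<Rightarrow> (nat \<Rightarrow> 'a::zero poly) \<Rightarrow> nat \<Rightarrow> real set" where
  "VL l n a 0 = uminus ` slopesL l n a"
| "VL l n a (Suc k) = (\<Union>v\<in>VL l n a k. piL l n a ` PsiL l n a v)"

definition VsetL :: "nat \<Rightarrow> nat \<Rightarrow> (nat \<Rightarrow> 'a::zero poly) \<Rightarrow> real set" where
  "VsetL l n a = (\<Union>k. VL l n a k)"

definition hL :: "nat \<Rightarrow> nat \<Rightarrow> real \<Rightarrow> nat" where
  "hL d l v = (LEAST i. v * real d * real l ^ i \<in> \<int>)"

text \<open>epsilon(v) = min {w in V : w > v} - v, with None standing for +infinity.\<close>
definition epsL :: "nat \<Rightarrow> nat \<Rightarrow> (nat \<Rightarrow> 'a::zero poly) \<Rightarrow> real \<Rightarrow> real option" where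
  "epsL l n a v = (if \<exists>w\<in>VsetL l n a. w > v
      then Some ((LEAST w. w \<in> VsetL l n a \<and> w > v) - v) else None)"

text \<open>tau = min(epsilon(-mu_1), ..., epsilon(-mu_kappa), 1/(d l^n)); infinite values are ignored.\<close>
definition tauL :: "nat \<Rightarrow> nat \<Rightarrow> nat \<Rightarrow> (nat \<Rightarrow> 'a::zero poly) \<Rightarrow> real" where
  "tauL d l n a = Min ({1 / (real d * real l ^ n)} \<union>
      {e. \<exists>\<mu>\<in>slopesL l n a. epsL l n a (- \<mu>) = Some e})"

end

theory Submission
  imports Defs
begin

lemma psupp_fin: "finite (psupp p)"
proof -
  have "psupp p \<subseteq> {..degree p}" by (auto simp: psupp_def le_degree)
  then show ?thesis using finite_subset by blast
qed

lemma pval_mem: "p \<noteq> 0 \<Longrightarrow> pval p \<in> psupp p"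
proof -
  assume "p \<noteq> 0"
  then have "coeff p (degree p) \<noteq> 0" by simp
  then have "coeff p (LEAST j. coeff p j \<noteq> 0) \<noteq> 0" by (rule LeastI)
  then show ?thesis unfolding pval_def psupp_def by simp
qed

lemma pval_le: "j \<in> psupp p \<Longrightarrow> pval p \<le> j"
  unfolding pval_def psupp_def by (simp add: Least_le)

lemma psupp_nz: "j \<in> psupp p \<Longrightarrow> p \<noteq> 0"
  unfolding psupp_def by auto

lemma collinear_line:
  fixes F :: "(real \<times> real) set"
  assumes "collinear F" "p \<in> F" "q \<in> F" "fst p \<noteq> fst q"
    and "snd p - \<mu> * fst p = snd q - \<mu> * fst q" and "w \<in> F"
  shows "snd w - \<mu> * fst w = snd q - \<mu> * fst q"
proof -
  obtain u where u: "\<And>x y. x \<in> F \<Longrightarrow> y \<in> F \<Longrightarrow> \<exists>k. x - y = k *\<^sub>R u"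
    using assms(1) unfolding collinear_def by metis
  obtain k1 where k1: "p - q = k1 *\<^sub>R u" using u[OF assms(2,3)] by blast
  obtain k2 where k2: "w - q = k2 *\<^sub>R u" using u[OF assms(6,3)] by blast
  have f1: "fst p - fst q = k1 * fst u" "snd p - snd q = k1 * snd u"
    using arg_cong[OF k1, of fst] arg_cong[OF k1, of snd] by auto
  have f2: "fst w - fst q = k2 * fst u" "snd w - snd q = k2 * snd u"
    using arg_cong[OF k2, of fst] arg_cong[OF k2, of snd] by auto
  have "k1 \<noteq> 0" using f1 assms(4) by auto
  moreover have "k1 * (snd u - \<mu> * fst u) = 0" using f1 assms(5) by (simp add: algebra_simps)
  ultimately have "snd u - \<mu> * fst u = 0" by simp
  then have "k2 * (snd u - \<mu> * fst u) = 0" by simp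
  then show ?thesis using f2 by (simp add: algebra_simps)
qed


lemma Ints_pos_ge1: "(z::real) \<in> \<int> \<Longrightarrow> 0 < z \<Longrightarrow> 1 \<le> z"
proof -
  assume "z \<in> \<int>" "0 < z"
  then obtain k where k: "z = of_int k" by (auto elim: Ints_cases)
  then have "0 < k" using \<open>0 < z\<close> by simp
  then show "1 \<le> z" using k by simp
qed

lemma Ints_mult_pow: "(z::real) \<in> \<int> \<Longrightarrow> z * real l ^ m \<in> \<int>"
  by (simp add: Ints_mult)

lemma hL_in: assumes "v * real d * real l ^ k \<in> \<int>" shows "v * real d * real l ^ hL d l v \<in> \<int>"
  unfolding hL_def by (rule LeastI[of _ k]) (rule assms)

lemma hL_le: "v * real d * real l ^ k \<in> \<int> \<Longrightarrow> hL d l v \<le> k"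
  unfolding hL_def by (rule Least_le)

lemma hL_min: "k < hL d l v \<Longrightarrow> v * real d * real l ^ k \<notin> \<int>"
  unfolding hL_def by (rule not_less_Least)

lemma hL_mono: assumes "v * real d * real l ^ k \<in> \<int>" "hL d l v \<le> m"
  shows "v * real d * real l ^ m \<in> \<int>"
proof -
  have "v * real d * real l ^ hL d l v * real l ^ (m - hL d l v) \<in> \<int>"
    using hL_in[OF assms(1)] by (rule Ints_mult_pow)
  moreover have "real l ^ hL d l v * real l ^ (m - hL d l v) = real l ^ m"
    using assms(2) by (simp flip: power_add)
  ultimately show ?thesis by (simp add: mult.assoc)
qed

lemma h_step:
  assumes Zv: "v * real d * real l ^ K \<in> \<int>" and eq: "w * real l ^ c = v * real l ^ i + z"
    and zI: "z \<in> \<int>" and H: "i + 1 \<le> hL d l v" and l1: "l \<ge> 1"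
  shows "hL d l v + c \<le> hL d l w + i"
proof (rule ccontr)
  assume "\<not> ?thesis"
  then have lt: "hL d l w \<le> (hL d l v - 1 - i) + c" using H by linarith
  define m where "m = hL d l v - 1 - i"
  have Zw: "w * real d * real l ^ (K + c) \<in> \<int>"
  proof -
    have "w * real d * real l ^ (K + c) = (v * real d * real l ^ K) * real l ^ i + z * real d * real l ^ K"
      using arg_cong[OF eq, of "\<lambda>t. t * real d * real l ^ K"]
      by (simp add: power_add algebra_simps)
    then show ?thesis using Zv zI by (simp add: Ints_mult Ints_add Ints_mult_pow)
  qed
  have "w * real d * real l ^ (m + c) \<in> \<int>" using hL_mono[OF Zw] lt m_def by simp
  moreover have "w * real d * real l ^ (m + c) = v * real d * real l ^ (hL d l v - 1) + z * real d * real l ^ m"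
  proof -
    have "w * real d * real l ^ (m + c) = (w * real l ^ c) * real d * real l ^ m" by (simp add: power_add algebra_simps)
    also have "\<dots> = v * real d * real l ^ (i + m) + z * real d * real l ^ m" unfolding eq by (simp add: power_add algebra_simps)
    also have "i + m = hL d l v - 1" unfolding m_def using H by simp
    finally show ?thesis .
  qed
  ultimately have "v * real d * real l ^ (hL d l v - 1) \<in> \<int>"
    using zI by (metis Ints_diff Ints_mult Ints_of_nat add_diff_cancel_right' of_nat_power)
  moreover have "hL d l v - 1 < hL d l v" using H by simp
  ultimately show False using hL_min by blast
qed


locale NPL =
  fixes l n :: nat and a :: "nat \<Rightarrow> 'a::zero poly"
  assumes l2: "l \<ge> 2" and n1: "n \<ge> 1" and a0: "a 0 \<noteq> 0" and an: "a n \<noteq> 0"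
begin

abbreviation "P \<equiv> ptsL l n a"

lemma P_iff: "(x,y) \<in> P \<longleftrightarrow> (\<exists>i j. i \<le> n \<and> j \<in> psupp (a i) \<and> x = real l ^ i \<and> y = real j)"
  by (auto simp: ptsL_def)

lemma P_eq: "P = (\<lambda>(i,j). (real l ^ i, real j)) ` (SIGMA i:{..n}. psupp (a i))"
  by (auto simp: ptsL_def)

lemma P_fin: "finite P"
  unfolding P_eq by (auto intro!: finite_SigmaI psupp_fin)

lemma P_ne: "P \<noteq> {}"
  using pval_mem[OF a0] by (auto simp: ptsL_def)

lemma l_pos: "real l > 0" using l2 by simp

lemma P_x: assumes "(x,y) \<in> P" shows "1 \<le> x" "x \<le> real l ^ n" "0 \<le> y" "x > 0"
proof -
  obtain i j where "i \<le> n" "x = real l ^ i" "y = real j" using assms P_iff by auto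
  then show "1 \<le> x" "x \<le> real l ^ n" "0 \<le> y" "x > 0"
    using l2 by (auto intro: power_increasing one_le_power)
qed

definition fL :: "real \<Rightarrow> real" where
  "fL t = Min ((\<lambda>(x,y). t*x + y) ` P)"

lemma Psi_eq: "PsiL l n a t = (\<lambda>(x,y). t*x + y) ` P"
  by (auto simp: PsiL_def)

lemma pi_eq: "piL l n a q = Max ((\<lambda>(x,y). (q - y)/x) ` P)"
  unfolding piL_def by (rule arg_cong[where f=Max]) auto

lemma f_le: "(x,y) \<in> P \<Longrightarrow> fL t \<le> t*x + y"
  unfolding fL_def using P_fin by (auto intro!: Min_le)

lemma f_ex: obtains x y where "(x,y) \<in> P" "fL t = t*x + y"
proof -
  have "fL t \<in> (\<lambda>(x,y). t*x + y) ` P" unfolding fL_def using P_fin P_ne by (intro Min_in) auto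
  then show ?thesis using that by auto
qed

lemma f_ge_iff: "q \<le> fL t \<longleftrightarrow> (\<forall>(x,y)\<in>P. q \<le> t*x + y)"
  unfolding fL_def using P_fin P_ne by (auto simp: Min_ge_iff)

lemma pi_ge: "(x,y) \<in> P \<Longrightarrow> (q - y)/x \<le> piL l n a q"
  unfolding pi_eq using P_fin by (auto intro!: Max_ge)

lemma pi_ex: obtains x y where "(x,y) \<in> P" "piL l n a q = (q - y)/x"
proof -
  have "piL l n a q \<in> (\<lambda>(x,y). (q-y)/x) ` P" unfolding pi_eq using P_fin P_ne by (intro Max_in) auto
  then show ?thesis using that by auto
qed

lemma pi_le_iff: "piL l n a q \<le> s \<longleftrightarrow> q \<le> fL s"
proof -
  have "piL l n a q \<le> s \<longleftrightarrow> (\<forall>(x,y)\<in>P. (q-y)/x \<le> s)"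
    unfolding pi_eq using P_fin P_ne by (auto simp: Max_le_iff)
  also have "\<dots> \<longleftrightarrow> (\<forall>(x,y)\<in>P. q \<le> s*x + y)"
  proof -
    have "(q-y)/x \<le> s \<longleftrightarrow> q \<le> s*x + y" if "(x,y) \<in> P" for x y
      using P_x[OF that] by (simp add: pos_divide_le_eq algebra_simps)
    then show ?thesis by auto
  qed
  finally show ?thesis using f_ge_iff by simp
qed

lemma f_pi: "fL (piL l n a q) = q"
proof -
  have A: "q \<le> fL (piL l n a q)" using pi_le_iff[of q "piL l n a q"] by simp
  obtain x y where xy: "(x,y) \<in> P" "piL l n a q = (q - y)/x" by (rule pi_ex)
  have "fL (piL l n a q) \<le> ((q - y)/x)*x + y" using f_le[of x y "(q - y)/x"] xy by simp
  also have "\<dots> = q" using P_x[OF xy(1)] by simp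
  finally show ?thesis using A by simp
qed

lemma pi_ge_v: "(x,y) \<in> P \<Longrightarrow> v \<le> piL l n a (v * x + y)"
  using pi_ge[of x y "v * x + y"] P_x[of x y] by simp

lemma f_mono: "s \<le> t \<Longrightarrow> fL s \<le> fL t"
proof -
  assume st: "s \<le> t"
  obtain x y where xy: "(x,y) \<in> P" "fL t = t*x + y" by (rule f_ex)
  have "fL s \<le> s*x + y" using f_le[OF xy(1)] .
  also have "\<dots> \<le> t*x + y" using st P_x[OF xy(1)] by (intro add_right_mono mult_right_mono) auto
  finally show ?thesis using xy by simp
qed

lemma f_lip: assumes "0 \<le> \<delta>" shows "fL (s + \<delta>) \<le> fL s + \<delta> * real l ^ n"
proof -
  obtain x y where xy: "(x,y) \<in> P" "fL s = s*x + y" by (rule f_ex)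
  have "fL (s+\<delta>) \<le> (s+\<delta>)*x + y" using f_le[OF xy(1)] .
  also have "\<dots> = fL s + \<delta> * x" using xy by (simp add: algebra_simps)
  also have "\<dots> \<le> fL s + \<delta> * real l ^ n" using P_x[OF xy(1)] assms
    by (intro add_left_mono mult_left_mono) auto
  finally show ?thesis .
qed

definition Gs :: "(real \<times> real) set" where
  "Gs = {(real l ^ i, y) | i y. i \<le> n \<and> a i \<noteq> 0 \<and> real (pval (a i)) \<le> y}"

lemma NP_eq: "newton_polygon l n a = convex hull Gs"
  unfolding newton_polygon_def Gs_def by simp

lemma G_P: assumes "z \<in> Gs" obtains y0 where "(fst z, y0) \<in> P" "y0 \<le> snd z"
proof -
  obtain i y where "z = (real l ^ i, y)" "i \<le> n" "a i \<noteq> 0" "real (pval (a i)) \<le> y"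
    using assms unfolding Gs_def by auto
  moreover have "(real l ^ i, real (pval (a i))) \<in> P"
    using pval_mem[OF \<open>a i \<noteq> 0\<close>] \<open>i \<le> n\<close> by (auto simp: ptsL_def)
  ultimately show ?thesis using that by auto
qed

lemma P_G: assumes "z \<in> P" shows "z \<in> Gs"
proof -
  obtain i j where "z = (real l ^ i, real j)" "i \<le> n" "j \<in> psupp (a i)"
    using assms by (auto simp: ptsL_def)
  then show ?thesis unfolding Gs_def using psupp_nz pval_le by fastforce
qed

lemma P_NP: "z \<in> P \<Longrightarrow> z \<in> newton_polygon l n a"
  unfolding NP_eq using P_G by (simp add: hull_inc)

lemma convex_half: "convex {z::real\<times>real. b \<le> \<alpha> * fst z + \<gamma> * snd z}"
proof -
  have "{z::real\<times>real. b \<le> \<alpha> * fst z + \<gamma> * snd z} = {z. inner (\<alpha>,\<gamma>) z \<ge> b}"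
    by (auto simp: inner_prod_def)
  then show ?thesis using convex_halfspace_ge by metis
qed

lemma NP_half:
  assumes "0 \<le> \<gamma>" "\<And>x y. (x,y) \<in> P \<Longrightarrow> b \<le> \<alpha> * x + \<gamma> * y"
    and "z \<in> newton_polygon l n a"
  shows "b \<le> \<alpha> * fst z + \<gamma> * snd z"
proof -
  have "Gs \<subseteq> {z. b \<le> \<alpha> * fst z + \<gamma> * snd z}"
  proof
    fix z assume "z \<in> Gs"
    then obtain y0 where y0: "(fst z, y0) \<in> P" "y0 \<le> snd z" by (rule G_P)
    have "b \<le> \<alpha> * fst z + \<gamma> * y0" using assms(2)[OF y0(1)] .
    also have "\<dots> \<le> \<alpha> * fst z + \<gamma> * snd z" using y0(2) assms(1) by (simp add: mult_left_mono)
    finally show "z \<in> {z. b \<le> \<alpha> * fst z + \<gamma> * snd z}" by simp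
  qed
  then have "convex hull Gs \<subseteq> {z. b \<le> \<alpha> * fst z + \<gamma> * snd z}"
    by (intro hull_minimal convex_half)
  then show ?thesis using assms(3) NP_eq by auto
qed

lemma NP_convex: "convex (newton_polygon l n a)"
  unfolding NP_eq by simp

lemma NP_up:
  assumes "z \<in> newton_polygon l n a" "0 \<le> t"
  shows "z + (0,t) \<in> newton_polygon l n a"
proof -
  let ?U = "{z. \<forall>t\<ge>0. z + (0,t) \<in> convex hull Gs}"
  have "Gs \<subseteq> ?U"
  proof
    fix z assume "z \<in> Gs"
    then have "\<forall>t\<ge>0. z + (0,t) \<in> Gs" unfolding Gs_def by force
    then show "z \<in> ?U" by (simp add: hull_inc)
  qed
  moreover have "convex ?U"
  proof (rule convexI)
    fix x y :: "real\<times>real" and u v :: real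
    assume x: "x \<in> ?U" and y: "y \<in> ?U" and uv: "0 \<le> u" "0 \<le> v" "u + v = 1"
    show "u *\<^sub>R x + v *\<^sub>R y \<in> ?U"
    proof (simp, intro allI impI)
      fix t :: real assume t: "0 \<le> t"
      have "u *\<^sub>R (x + (0,t)) + v *\<^sub>R (y + (0,t)) \<in> convex hull Gs"
        using x y uv t by (intro convexD) auto
      moreover have "u *\<^sub>R (x + (0,t)) + v *\<^sub>R (y + (0,t)) = u *\<^sub>R x + v *\<^sub>R y + (0,t)"
        using uv by (auto simp: algebra_simps prod_eq_iff simp flip: distrib_left)
      ultimately show "u *\<^sub>R x + v *\<^sub>R y + (0, t) \<in> convex hull Gs" by simp
    qed
  qed
  ultimately have "convex hull Gs \<subseteq> ?U" by (rule hull_minimal)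
  then show ?thesis using assms NP_eq by auto
qed

lemma breakpoint_slope:
  assumes p1: "(x1,y1) \<in> P" and p2: "(x2,y2) \<in> P" and lt: "x1 < x2"
    and e1: "\<beta>*x1 + y1 = fL \<beta>" and e2: "\<beta>*x2 + y2 = fL \<beta>"
  shows "-\<beta> \<in> slopesL l n a"
proof -
  let ?S = "newton_polygon l n a"
  let ?F = "?S \<inter> {z. inner (\<beta>,1) z = fL \<beta>}"
  have sup: "\<And>z. z \<in> ?S \<Longrightarrow> inner (\<beta>,1) z \<ge> fL \<beta>"
  proof -
    fix z assume "z \<in> ?S"
    have "fL \<beta> \<le> \<beta> * fst z + 1 * snd z"
      by (rule NP_half[OF _ _ \<open>z \<in> ?S\<close>]) (auto dest: f_le)
    then show "inner (\<beta>,1) z \<ge> fL \<beta>" by (simp add: inner_prod_def)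
  qed
  have face: "?F face_of ?S"
    by (rule face_of_Int_supporting_hyperplane_ge)
       (auto intro: convex_Int NP_convex convex_hyperplane sup)
  have in1: "(x1,y1) \<in> ?F" using P_NP[OF p1] e1 by (simp add: inner_prod_def)
  have in2: "(x2,y2) \<in> ?F" using P_NP[OF p2] e2 by (simp add: inner_prod_def)
  have "aff_dim {(x1,y1),(x2,y2)} = 1" using lt by simp
  then have ge: "1 \<le> aff_dim ?F"
    by (metis aff_dim_subset empty_subsetI in1 in2 insert_subset)
  have "collinear ?F"
    unfolding collinear_def
  proof (intro exI[of _ "(1::real, -\<beta>)"] ballI)
    fix z w assume z: "z \<in> ?F" and w: "w \<in> ?F"
    then have "\<beta> * fst z + snd z = \<beta> * fst w + snd w" by (simp add: inner_prod_def)
    then have "z - w = (fst z - fst w) *\<^sub>R (1::real, -\<beta>)"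
      by (simp add: prod_eq_iff algebra_simps)
    then show "\<exists>c. z - w = c *\<^sub>R (1, - \<beta>)" by blast
  qed
  then have "aff_dim ?F \<le> 1" by (simp add: collinear_aff_dim)
  with ge have "aff_dim ?F = 1" by simp
  moreover have "-\<beta> = (snd (x2,y2) - snd (x1,y1)) / (fst (x2,y2) - fst (x1,y1))"
    using lt e1 e2 by (simp add: field_simps)
  moreover have "\<exists>p\<in>?F. \<exists>q\<in>?F. fst p < fst q \<and> -\<beta> = (snd q - snd p) / (fst q - fst p)"
    using in1 in2 lt \<open>-\<beta> = (snd (x2,y2) - snd (x1,y1)) / (fst (x2,y2) - fst (x1,y1))\<close>
    by (intro bexI[OF _ in1] bexI[OF _ in2]) simp
  ultimately show ?thesis unfolding slopesL_def mem_Collect_eq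
    using face by blast
qed


lemma NP_fst: assumes "z \<in> newton_polygon l n a" shows "1 \<le> fst z" "fst z \<le> real l ^ n"
proof -
  have "1 \<le> 1 * fst z + 0 * snd z"
    by (rule NP_half[OF _ _ assms]) (auto dest: P_x)
  then show "1 \<le> fst z" by simp
  have "- (real l ^ n) \<le> (-1) * fst z + 0 * snd z"
    by (rule NP_half[OF _ _ assms]) (auto dest: P_x)
  then show "fst z \<le> real l ^ n" by simp
qed

lemma slope_pts:
  assumes "\<mu> \<in> slopesL l n a"
  shows "\<exists>z1\<in>P. \<exists>z2\<in>P. fst z1 < fst z2 \<and> \<mu> = (snd z2 - snd z1) / (fst z2 - fst z1)"
proof -
  let ?S = "newton_polygon l n a"
  obtain F p q where F: "F face_of ?S" "aff_dim F = 1" and pq: "p \<in> F" "q \<in> F" "fst p < fst q"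
    and mu: "\<mu> = (snd q - snd p) / (fst q - fst p)"
    using assms unfolding slopesL_def by auto
  define g where "g z = snd z - \<mu> * fst z" for z :: "real \<times> real"
  define c where "c = g p"
  have gq: "g q = c" unfolding c_def g_def mu using pq(3) by (simp add: field_simps)
  have FS: "F \<subseteq> ?S" using F(1) face_of_imp_subset by blast
  have pS: "p \<in> ?S" and qS: "q \<in> ?S" using pq FS by auto
  have convF: "convex F" using F(1) face_of_imp_convex by blast
  have colF: "collinear F" using F(2) by (simp add: collinear_aff_dim)
  have gdiff: "g (x - y) = g x - g y" for x y unfolding g_def by (simp add: algebra_simps)
  have gscale: "g (k *\<^sub>R x) = k * g x" for k x unfolding g_def by (simp add: algebra_simps)
  have sup: "c \<le> g z" if zS: "z \<in> ?S" for z
  proof (rule ccontr)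
    assume "\<not> c \<le> g z"
    then have gz: "g z < c" by simp
    define m where "m = (1/2) *\<^sub>R p + (1/2) *\<^sub>R q"
    have mF: "m \<in> F" unfolding m_def using convexD[OF convF pq(1) pq(2), of "1/2" "1/2"] by simp
    have "g m = (1/2) * g p + (1/2) * g q" unfolding m_def g_def by (simp add: algebra_simps)
    then have gm: "g m = c" using gq c_def by simp
    define D where "D = \<bar>fst m - fst z\<bar> + 1"
    have Dpos: "D > 0" unfolding D_def by simp
    define s where "s = (fst q - fst p) / (2 * D)"
    have spos: "s > 0" unfolding s_def using pq(3) Dpos by simp
    define m' where "m' = m + s *\<^sub>R (m - z)"
    have fm: "fst m = (fst p + fst q) / 2" unfolding m_def by simp
    have "\<bar>s * (fst m - fst z)\<bar> \<le> s * D" unfolding D_def using spos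
      by (simp add: abs_mult mult_left_mono)
    also have "s * D = (fst q - fst p) / 2" unfolding s_def using Dpos by simp
    finally have bnd: "\<bar>s * (fst m - fst z)\<bar> \<le> (fst q - fst p) / 2" .
    have fm': "fst m' = fst m + s * (fst m - fst z)" unfolding m'_def by simp
    define r where "r = (fst m' - fst p) / (fst q - fst p)"
    define Z where "Z = s * (fst m - fst z)"
    have b1: "Z \<le> (fst q - fst p) / 2" and b2: "- Z \<le> (fst q - fst p) / 2"
      using bnd unfolding Z_def abs_le_iff by auto
    have fm'': "fst m' = fst m + Z" using fm' Z_def by simp
    have fmb1: "fst p \<le> fst m'" using b1 b2 fm fm'' by argo
    have fmb2: "fst m' \<le> fst q" using b1 b2 fm fm'' by argo
    note fmb = fmb1 fmb2
    have r01: "0 \<le> r" "r \<le> 1" unfolding r_def using fmb pq(3)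
      by (auto simp: divide_le_eq_1)
    define s0 where "s0 = (1 - r) *\<^sub>R p + r *\<^sub>R q"
    have s0S: "s0 \<in> ?S" unfolding s0_def using convexD[OF NP_convex pS qS] r01 by simp
    have rr: "r * (fst q - fst p) = fst m' - fst p" unfolding r_def using pq(3) by simp
    have "fst s0 = fst p + r * (fst q - fst p)" unfolding s0_def by (simp add: algebra_simps)
    then have fs0: "fst s0 = fst m'" using rr by simp
    have "g s0 = (1 - r) * g p + r * g q" unfolding s0_def g_def by (simp add: algebra_simps)
    then have gs0: "g s0 = c" using gq c_def by (simp add: algebra_simps)
    have gm': "g m' = c + s * (c - g z)" unfolding m'_def using gm
      by (simp add: g_def algebra_simps)
    have gm'c: "g m' > c" using gm' spos gz by simp
    have up: "snd m' - snd s0 > 0" using gm'c gs0 fs0 unfolding g_def by simp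
    have "m' = s0 + (0, snd m' - snd s0)" using fs0 by (simp add: prod_eq_iff)
    then have m'S: "m' \<in> ?S" using NP_up[OF s0S, of "snd m' - snd s0"] up by simp
    have zm': "z \<noteq> m'" using gz gm'c by auto
    have e1: "s *\<^sub>R z + m' = (1+s) *\<^sub>R m" unfolding m'_def by (simp add: algebra_simps)
    have e2: "1 - 1/(1+s) = s/(1+s)" using spos by (simp add: field_simps)
    have "(1 - 1/(1+s)) *\<^sub>R z + (1/(1+s)) *\<^sub>R m' = (1/(1+s)) *\<^sub>R (s *\<^sub>R z + m')"
      by (simp add: e2 scaleR_add_right)
    also have "\<dots> = m" using e1 spos by simp
    finally have "m = (1 - 1/(1+s)) *\<^sub>R z + (1/(1+s)) *\<^sub>R m'" by simp
    moreover have "0 < 1/(1+s)" "1/(1+s) < 1" using spos by auto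
    ultimately have "m \<in> open_segment z m'" using zm' unfolding in_segment by blast
    then have zF: "z \<in> F" using F(1) zS m'S mF unfolding face_of_def by blast
    have "g z = g q" using collinear_line[OF colF pq(1) pq(2) _ _ zF, of \<mu>] pq(3) gq c_def
      unfolding g_def by simp
    then show False using gz gq by simp
  qed
  define Q where "Q = {z\<in>P. g z = c}"
  have "\<exists>z1\<in>Q. \<exists>z2\<in>Q. fst z1 < fst z2"
  proof (rule ccontr)
    assume H: "\<not> (\<exists>z1\<in>Q. \<exists>z2\<in>Q. fst z1 < fst z2)"
    define X0 where "X0 = (if Q = {} then fst p else fst (SOME z. z \<in> Q))"
    have QX: "fst z = X0" if "z \<in> Q" for z
    proof -
      have "(SOME z. z \<in> Q) \<in> Q" using that by (rule someI)
      moreover have "\<not> fst z < fst (SOME z. z \<in> Q)" "\<not> fst (SOME z. z \<in> Q) < fst z"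
        using H that \<open>(SOME z. z \<in> Q) \<in> Q\<close> by blast+
      ultimately show ?thesis using that unfolding X0_def by auto
    qed
    have X0b: "1 \<le> X0" "X0 \<le> real l ^ n"
    proof -
      have "(1 \<le> X0 \<and> X0 \<le> real l ^ n)"
      proof (cases "Q = {}")
        case True then show ?thesis unfolding X0_def using NP_fst[OF pS] by simp
      next
        case False
        then have "(SOME z. z \<in> Q) \<in> Q" by (simp add: some_in_eq)
        then have "(SOME z. z \<in> Q) \<in> P" unfolding Q_def by simp
        then show ?thesis unfolding X0_def using False P_x[of "fst (SOME z. z \<in> Q)" "snd (SOME z. z \<in> Q)"] by auto
      qed
      then show "1 \<le> X0" "X0 \<le> real l ^ n" by auto
    qed
    define \<epsilon> where "\<epsilon> = Min (insert 1 ((\<lambda>z. g z - c) ` (P - Q)))"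
    have fin: "finite (insert 1 ((\<lambda>z. g z - c) ` (P - Q)))" using P_fin by simp
    have pos: "c < g z" if "z \<in> P - Q" for z
    proof -
      have "c \<le> g z" "g z \<noteq> c" using that sup[OF P_NP] unfolding Q_def by auto
      then show ?thesis by simp
    qed
    have epos: "\<epsilon> > 0" unfolding \<epsilon>_def using fin pos by (simp add: Min_gr_iff)
    have ePQ: "\<epsilon> \<le> g z - c" if "z \<in> P - Q" for z unfolding \<epsilon>_def using fin that by (intro Min_le) auto
    define lm where "lm = \<epsilon> / real l ^ n"
    have lpos: "lm > 0" unfolding lm_def using epos l2 by simp
    have lam: "lm * real l ^ n = \<epsilon>" unfolding lm_def using l2 by simp
    have key: "c \<le> g z + \<sigma> * lm * (fst z - X0)" if "z \<in> P" "\<bar>\<sigma>\<bar> = 1" for z \<sigma>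
    proof (cases "z \<in> Q")
      case True then show ?thesis using QX unfolding Q_def by simp
    next
      case False
      have zb: "1 \<le> fst z" "fst z \<le> real l ^ n" using that(1) P_x[of "fst z" "snd z"] by auto
      have "\<bar>\<sigma> * lm * (fst z - X0)\<bar> = lm * \<bar>fst z - X0\<bar>" using that(2) lpos by (simp add: abs_mult)
      also have "\<dots> \<le> lm * real l ^ n" using zb X0b lpos by (intro mult_left_mono) auto
      finally have "\<bar>\<sigma> * lm * (fst z - X0)\<bar> \<le> \<epsilon>" using lam by simp
      moreover have "\<epsilon> \<le> g z - c" using ePQ False that(1) by simp
      ultimately show ?thesis by linarith
    qed
    have key2: "fst w = X0" if "w \<in> F" for w
    proof -
      have wS: "w \<in> ?S" using that FS by auto
      have gw: "g w = c" using collinear_line[OF colF pq(1) pq(2) _ _ that, of \<mu>] pq(3) gq c_def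
        unfolding g_def by simp
      have hh: "c + \<sigma> * lm * X0 \<le> (\<sigma> * lm - \<mu>) * fst w + 1 * snd w" if sg: "\<bar>\<sigma>\<bar> = 1" for \<sigma>
      proof -
        have H: "c + \<sigma> * lm * X0 \<le> (\<sigma> * lm - \<mu>) * x + 1 * y" if xy: "(x,y) \<in> P" for x y
        proof -
          have "c \<le> g (x,y) + \<sigma> * lm * (fst (x,y) - X0)" using key[OF xy sg] .
          then show ?thesis unfolding g_def by (simp add: algebra_simps)
        qed
        show ?thesis by (rule NP_half[OF _ H wS]) simp
      qed
      from hh[of 1] have "lm * X0 \<le> lm * fst w" using gw unfolding g_def by (simp add: algebra_simps)
      then have A1: "X0 \<le> fst w" using lpos by simp
      from hh[of "-1"] have "lm * fst w \<le> lm * X0" using gw unfolding g_def by (simp add: algebra_simps)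
      then have A2: "fst w \<le> X0" using lpos by simp
      from A1 A2 show ?thesis by simp
    qed
    then have "fst p = X0" "fst q = X0" using pq by auto
    then show False using pq(3) by simp
  qed
  then obtain z1 z2 where z: "z1 \<in> Q" "z2 \<in> Q" "fst z1 < fst z2" by blast
  then have "\<mu> = (snd z2 - snd z1) / (fst z2 - fst z1)" unfolding Q_def g_def
    by (simp add: field_simps)
  then show ?thesis using z unfolding Q_def by blast
qed

lemma slopes_fin: "finite (slopesL l n a)"
proof -
  have "slopesL l n a \<subseteq> (\<lambda>(z1,z2). (snd z2 - snd z1) / (fst z2 - fst z1)) ` (P \<times> P)"
    using slope_pts by fastforce
  moreover have "finite ((\<lambda>(z1,z2). (snd z2 - snd z1) / (fst z2 - fst z1)) ` (P \<times> P))"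
    using P_fin by simp
  ultimately show ?thesis using finite_subset by blast
qed

abbreviation "V \<equiv> VsetL l n a"

lemma V_iff: "w \<in> V \<longleftrightarrow> (\<exists>k. w \<in> VL l n a k)"
  unfolding VsetL_def by auto

lemma VL_step: assumes "v \<in> VL l n a k" "(x,y) \<in> P" shows "piL l n a (v * x + y) \<in> VL l n a (Suc k)"
proof -
  have "v * x + y \<in> PsiL l n a v" unfolding Psi_eq using assms(2) by force
  then have "piL l n a (v * x + y) \<in> piL l n a ` PsiL l n a v" by (rule imageI)
  then show ?thesis using assms(1) by auto
qed

lemma V_step: "v \<in> V \<Longrightarrow> (x,y) \<in> P \<Longrightarrow> piL l n a (v * x + y) \<in> V"
  using VL_step V_iff by blast

lemma VL_Suc: assumes "w \<in> VL l n a (Suc k)"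
  obtains v x y where "v \<in> VL l n a k" "(x,y) \<in> P" "w = piL l n a (v * x + y)"
  using assms by (auto simp: Psi_eq)

lemma V0_fin: "finite (VL l n a 0)"
  using slopes_fin by simp

lemma V_ge: assumes "w \<in> V" shows "- Max (slopesL l n a) \<le> w"
proof -
  obtain k where "w \<in> VL l n a k" using assms V_iff by auto
  then show ?thesis
  proof (induction k arbitrary: w)
    case 0
    then obtain \<mu> where "\<mu> \<in> slopesL l n a" "w = - \<mu>" by auto
    then show ?case using slopes_fin by simp
  next
    case (Suc k)
    obtain v x y where "v \<in> VL l n a k" "(x,y) \<in> P" "w = piL l n a (v * x + y)"
      by (rule VL_Suc[OF Suc.prems(1)])
    then have "- Max (slopesL l n a) \<le> v" "v \<le> w" using Suc.IH pi_ge_v by auto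
    then show ?case by simp
  qed
qed

lemma V_chain:
  assumes "w \<in> VL l n a k" "s < w"
  shows "(\<exists>v\<in>VL l n a 0. s < v \<and> v \<le> w) \<or> (\<exists>u\<in>V. \<exists>x y. (x,y) \<in> P \<and> u \<le> s \<and> s < piL l n a (u * x + y) \<and> piL l n a (u * x + y) \<le> w)"
  using assms
proof (induction k arbitrary: w)
  case 0 then show ?case by (intro disjI1 bexI[of _ w]) auto
next
  case (Suc k)
  obtain v x y where v: "v \<in> VL l n a k" "(x,y) \<in> P" "w = piL l n a (v * x + y)"
    by (rule VL_Suc[OF Suc.prems(1)])
  have vw: "v \<le> w" using v pi_ge_v by simp
  show ?case
  proof (cases "v \<le> s")
    case True
    then show ?thesis using v Suc.prems V_iff by blast
  next
    case False
    then have "s < v" by simp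
    from Suc.IH[OF v(1) this] show ?thesis
    proof
      assume "\<exists>v0\<in>VL l n a 0. s < v0 \<and> v0 \<le> v"
      then obtain v0 where "v0 \<in> VL l n a 0" "s < v0" "v0 \<le> v" by blast
      then have "v0 \<in> VL l n a 0 \<and> s < v0 \<and> v0 \<le> w" using vw by simp
      then show ?thesis by blast
    next
      assume "\<exists>u\<in>V. \<exists>x y. (x,y) \<in> P \<and> u \<le> s \<and> s < piL l n a (u * x + y) \<and> piL l n a (u * x + y) \<le> v"
      then obtain u x' y' where "u \<in> V" "(x',y') \<in> P" "u \<le> s" "s < piL l n a (u * x' + y')" "piL l n a (u * x' + y') \<le> v"
        by blast
      then have "u \<in> V \<and> (x',y') \<in> P \<and> u \<le> s \<and> s < piL l n a (u * x' + y') \<and> piL l n a (u * x' + y') \<le> w"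
        using vw by simp
      then show ?thesis by blast
    qed
  qed
qed

definition racc :: "real \<Rightarrow> bool" where
  "racc s \<longleftrightarrow> (\<forall>\<delta>>0. \<exists>w\<in>V. s < w \<and> w < s + \<delta>)"

lemma descent:
  assumes "racc s"
  shows "\<exists>y<s. racc y"
proof -
  define A where "A = {v \<in> VL l n a 0. s < v}"
  have Afin: "finite A" unfolding A_def using V0_fin by simp
  define \<delta>0 where "\<delta>0 = Min (insert 1 ((\<lambda>v. v - s) ` A))"
  have d0pos: "\<delta>0 > 0" unfolding \<delta>0_def using Afin by (auto simp: A_def Min_gr_iff)
  have d0le: "\<delta>0 \<le> v - s" if "v \<in> A" for v
    unfolding \<delta>0_def using Afin that by (intro Min_le) auto
  define yp where "yp z = (fL s - snd z) / fst z" for z :: "real \<times> real"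
  have lnpos: "real l ^ n > 0" using l2 by simp
  have claimA: "\<exists>z\<in>P. \<exists>u\<in>V. yp z < u \<and> u < yp z + \<delta> \<and> u \<le> s" if dpos: "\<delta> > 0" for \<delta>
  proof -
    define \<delta>' where "\<delta>' = min \<delta>0 (\<delta> / (2 * real l ^ n))"
    have d'pos: "\<delta>' > 0" unfolding \<delta>'_def using d0pos dpos lnpos by simp
    obtain w where w: "w \<in> V" "s < w" "w < s + \<delta>'" using assms d'pos unfolding racc_def by blast
    obtain k where wk: "w \<in> VL l n a k" using w V_iff by auto
    have "\<not> (\<exists>v0\<in>VL l n a 0. s < v0 \<and> v0 \<le> w)"
    proof
      assume "\<exists>v0\<in>VL l n a 0. s < v0 \<and> v0 \<le> w"
      then obtain v0 where "v0 \<in> VL l n a 0" "s < v0" "v0 \<le> w" by blast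
      then have "v0 \<in> A" unfolding A_def by simp
      then have "\<delta>0 \<le> v0 - s" by (rule d0le)
      then have "\<delta>0 \<le> w - s" using \<open>v0 \<le> w\<close> by simp
      moreover have "\<delta>' \<le> \<delta>0" unfolding \<delta>'_def by simp
      ultimately show False using w by simp
    qed
    then obtain u x y where u: "u \<in> V" "(x,y) \<in> P" "u \<le> s" "s < piL l n a (u * x + y)"
      "piL l n a (u * x + y) \<le> w"
      using V_chain[OF wk w(2)] by blast
    have xb: "1 \<le> x" "x > 0" using P_x[OF u(2)] by auto
    have "\<not> (u * x + y \<le> fL s)" using u(4) pi_le_iff by (metis not_le)
    then have "fL s - y < u * x" by simp
    then have lo: "yp (x,y) < u" unfolding yp_def using xb by (simp add: pos_divide_less_eq)
    have "u * x + y \<le> fL w" using u(5) pi_le_iff by simp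
    also have "\<dots> \<le> fL (s + \<delta>')" using w(3) by (intro f_mono) simp
    also have "\<dots> \<le> fL s + \<delta>' * real l ^ n" using d'pos by (intro f_lip) simp
    finally have "u * x \<le> fL s - y + \<delta>' * real l ^ n" by simp
    then have "u \<le> (fL s - y + \<delta>' * real l ^ n)/x" using xb by (simp add: pos_le_divide_eq)
    then have U: "u \<le> (fL s - y)/x + \<delta>' * real l ^ n / x" by (simp add: add_divide_distrib)
    have B: "\<delta>' * real l ^ n / x \<le> \<delta>' * real l ^ n" using xb d'pos lnpos
      by (simp add: divide_le_eq mult_le_cancel_left_pos)
    have C: "\<delta>' * real l ^ n \<le> \<delta> / 2" unfolding \<delta>'_def using lnpos
      by (simp add: min_def field_simps)
    have "u \<le> yp (x,y) + \<delta>/2" unfolding yp_def using U B C by simp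
    then have "u < yp (x,y) + \<delta>" using dpos by simp
    then show ?thesis using lo u(1-3) by (intro bexI[OF _ u(2)] bexI[OF _ u(1)]) simp
  qed
  have "\<exists>z\<in>P. \<forall>\<delta>>0. \<exists>u\<in>V. yp z < u \<and> u < yp z + \<delta> \<and> u \<le> s"
  proof (rule ccontr)
    assume "\<not> ?thesis"
    then have "\<forall>z\<in>P. \<exists>\<delta>>0. \<not> (\<exists>u\<in>V. yp z < u \<and> u < yp z + \<delta> \<and> u \<le> s)" by blast
    then obtain df where df: "\<And>z. z \<in> P \<Longrightarrow> df z > 0 \<and> \<not> (\<exists>u\<in>V. yp z < u \<and> u < yp z + df z \<and> u \<le> s)"
      by metis
    define dm where "dm = Min (df ` P)"
    have dmpos: "dm > 0" unfolding dm_def using P_fin P_ne df by (simp add: Min_gr_iff)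
    obtain z u where zu: "z \<in> P" "u \<in> V" "yp z < u" "u < yp z + dm" "u \<le> s" using claimA[OF dmpos] by blast
    have "dm \<le> df z" unfolding dm_def using P_fin zu(1) by simp
    then show False using df[OF zu(1)] zu by force
  qed
  then obtain z where z: "z \<in> P" "\<forall>\<delta>>0. \<exists>u\<in>V. yp z < u \<and> u < yp z + \<delta> \<and> u \<le> s" by blast
  have "racc (yp z)" unfolding racc_def using z(2) by blast
  moreover have "yp z < s" using z(2)[rule_format, of 1] by force
  ultimately show ?thesis by blast
qed

lemma racc_ge: assumes "racc s" shows "- Max (slopesL l n a) \<le> s"
proof (rule ccontr)
  assume "\<not> ?thesis"
  then have "0 < - Max (slopesL l n a) - s" by simp
  then obtain w where "w \<in> V" "w < s + (- Max (slopesL l n a) - s)" using assms unfolding racc_def by blast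
  then have "w < - Max (slopesL l n a)" by simp
  moreover have "- Max (slopesL l n a) \<le> w" using V_ge \<open>w \<in> V\<close> by blast
  ultimately show False by simp
qed

lemma no_racc: "\<not> racc s"
proof
  assume rs: "racc s"
  define D where "D = {s. racc s}"
  have bdd: "bdd_below D" unfolding D_def by (rule bdd_belowI[of _ "- Max (slopesL l n a)"]) (auto intro: racc_ge)
  have Dne: "D \<noteq> {}" using rs D_def by auto
  define \<sigma> where "\<sigma> = Inf D"
  have "racc \<sigma>" unfolding racc_def
  proof (intro allI impI)
    fix \<delta> :: real assume dpos: "\<delta> > 0"
    have "Inf D < \<sigma> + \<delta>/2" unfolding \<sigma>_def using dpos by simp
    then have "\<exists>t\<in>D. t < \<sigma> + \<delta>/2" using Dne bdd by (simp add: cInf_less_iff)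
    then obtain t where t: "racc t" "t < \<sigma> + \<delta>/2" unfolding D_def by auto
    have "t \<in> D" using t(1) D_def by simp
    then have "\<sigma> \<le> t" unfolding \<sigma>_def using bdd by (rule cInf_lower)
    have "\<delta>/2 > 0" using dpos by simp
    then obtain w where w: "w \<in> V" "t < w" "w < t + \<delta>/2" using t(1) unfolding racc_def by blast
    then have "\<sigma> < w \<and> w < \<sigma> + \<delta>" using \<open>\<sigma> \<le> t\<close> t(2) by simp
    then show "\<exists>w\<in>V. \<sigma> < w \<and> w < \<sigma> + \<delta>" using w(1) by blast
  qed
  then obtain y where "y < \<sigma>" "racc y" using descent by blast
  moreover have "y \<in> D" using \<open>racc y\<close> D_def by simp
  then have "\<sigma> \<le> y" unfolding \<sigma>_def using bdd by (rule cInf_lower)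
  ultimately show False by simp
qed

lemma V_least:
  assumes "\<exists>w\<in>V. \<beta> < w"
  shows "\<exists>m\<in>V. \<beta> < m \<and> (\<forall>w\<in>V. \<beta> < w \<longrightarrow> m \<le> w)"
proof -
  define S where "S = {w\<in>V. \<beta> < w}"
  have Sne: "S \<noteq> {}" using assms S_def by auto
  have bdd: "bdd_below S" unfolding S_def by (auto intro: bdd_belowI[of _ \<beta>])
  define \<sigma> where "\<sigma> = Inf S"
  have low: "\<sigma> \<le> w" if "w \<in> S" for w unfolding \<sigma>_def using that bdd by (rule cInf_lower)
  show ?thesis
  proof (cases "\<sigma> \<in> S")
    case True
    then show ?thesis using low unfolding S_def by auto
  next
    case False
    have "racc \<sigma>" unfolding racc_def
    proof (intro allI impI)
      fix \<delta> :: real assume dpos: "\<delta> > 0"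
      have "Inf S < \<sigma> + \<delta>" unfolding \<sigma>_def using dpos by simp
      then have "\<exists>t\<in>S. t < \<sigma> + \<delta>" using Sne bdd by (simp add: cInf_less_iff)
      then obtain t where t: "t \<in> S" "t < \<sigma> + \<delta>" by auto
      have "\<sigma> \<noteq> t" using False t(1) by blast
      then have "\<sigma> < t" using low[OF t(1)] by simp
      moreover have "t \<in> V" using t(1) unfolding S_def by simp
      ultimately show "\<exists>w\<in>V. \<sigma> < w \<and> w < \<sigma> + \<delta>" using t(2) by blast
    qed
    then show ?thesis using no_racc by simp
  qed
qed

end

locale NPLd = NPL +
  fixes d :: nat
  assumes d1: "d \<ge> 1" and dint: "\<forall>\<mu>\<in>slopesL l n a. real d * \<mu> \<in> \<int>"
begin

abbreviation "\<tau> \<equiv> tauL d l n a"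

lemma eps_some:
  assumes "epsL l n a t = Some e"
  shows "e > 0" "\<And>w. w \<in> V \<Longrightarrow> t < w \<Longrightarrow> t + e \<le> w"
proof -
  have ex: "\<exists>w\<in>V. w > t" using assms unfolding epsL_def by (auto split: if_splits)
  then have e: "e = (LEAST w. w \<in> V \<and> w > t) - t" using assms unfolding epsL_def by auto
  obtain m where m: "m \<in> V" "t < m" "\<And>w. w \<in> V \<Longrightarrow> t < w \<Longrightarrow> m \<le> w"
    using V_least[of t] ex by blast
  have "(LEAST w. w \<in> V \<and> w > t) = m"
    by (rule Least_equality) (use m in auto)
  then have em: "e = m - t" using e by simp
  show "e > 0" using em m by simp
  show "\<And>w. w \<in> V \<Longrightarrow> t < w \<Longrightarrow> t + e \<le> w" using em m by force
qed

definition "Eset = {e. \<exists>\<mu>\<in>slopesL l n a. epsL l n a (- \<mu>) = Some e}"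

lemma tau_eq: "\<tau> = Min ({1 / (real d * real l ^ n)} \<union> Eset)"
  unfolding tauL_def Eset_def by simp

lemma Eset_fin: "finite Eset"
proof -
  have "Eset \<subseteq> (\<lambda>\<mu>. the (epsL l n a (- \<mu>))) ` slopesL l n a"
    unfolding Eset_def by force
  then show ?thesis using slopes_fin finite_subset by blast
qed

lemma tau_pos: "\<tau> > 0"
proof -
  have "\<forall>e\<in>Eset. 0 < e" unfolding Eset_def using eps_some(1) by blast
  moreover have "0 < 1 / (real d * real l ^ n)" using d1 l2 by simp
  ultimately show ?thesis unfolding tau_eq using Eset_fin by (simp add: Min_gr_iff)
qed

lemma tau_le1: "\<tau> \<le> 1 / (real d * real l ^ n)"
  unfolding tau_eq using Eset_fin by (intro Min_le) auto

lemma gap: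
  assumes "-\<beta> \<in> slopesL l n a" "w \<in> V" "\<beta> < w"
  shows "\<beta> + \<tau> \<le> w"
proof -
  have "\<exists>w\<in>V. w > \<beta>" using assms by blast
  then obtain e where e: "epsL l n a \<beta> = Some e" unfolding epsL_def by simp
  then have "e \<in> Eset" unfolding Eset_def using assms(1) by force
  then have "\<tau> \<le> e" unfolding tau_eq using Eset_fin by (intro Min_le) auto
  moreover have "\<beta> + e \<le> w" using eps_some(2)[OF e assms(2,3)] .
  ultimately show ?thesis by simp
qed

lemma P_nat: assumes "(x,y) \<in> P" obtains i j where "i \<le> n" "x = real l ^ i" "y = real j"
  using assms P_iff by auto

lemma V_Z: assumes "v \<in> V" shows "\<exists>K. v * real d * real l ^ K \<in> \<int>"
proof -
  obtain k where "v \<in> VL l n a k" using assms V_iff by auto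
  then show ?thesis
  proof (induction k arbitrary: v)
    case 0
    then obtain \<mu> where "\<mu> \<in> slopesL l n a" "v = - \<mu>" by auto
    then have "v * real d * real l ^ 0 = - (real d * \<mu>)" by simp
    then show ?case using dint \<open>\<mu> \<in> slopesL l n a\<close> by (metis Ints_minus)
  next
    case (Suc k)
    obtain u x y where u: "u \<in> VL l n a k" "(x,y) \<in> P" "v = piL l n a (u * x + y)"
      by (rule VL_Suc[OF Suc.prems(1)])
    obtain K where K: "u * real d * real l ^ K \<in> \<int>" using Suc.IH[OF u(1)] by blast
    obtain x' y' where xy': "(x',y') \<in> P" "v = (u * x + y - y') / x'"
      using pi_ex u(3) by metis
    obtain i j where ij: "x = real l ^ i" "y = real j" using P_nat[OF u(2)] by metis
    obtain c e where ce: "x' = real l ^ c" "y' = real e" using P_nat[OF xy'(1)] by metis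
    have x'pos: "x' > 0" using P_x[OF xy'(1)] by simp
    have "v * x' = u * x + y - y'" using xy'(2) x'pos by (simp add: field_simps)
    then have eq2: "v * real l ^ c = u * real l ^ i + (real j - real e)" using ce ij by simp
    have "v * real d * real l ^ (K + c) = (v * real l ^ c) * (real d * real l ^ K)" by (simp add: power_add algebra_simps)
    also have "\<dots> = (u * real l ^ i + (real j - real e)) * (real d * real l ^ K)" using eq2 by simp
    also have "\<dots> = (u * real d * real l ^ K) * real l ^ i + (real j - real e) * real d * real l ^ K"
      by (simp add: algebra_simps)
    finally have "v * real d * real l ^ (K + c) = (u * real d * real l ^ K) * real l ^ i + (real j - real e) * real d * real l ^ K" .
    moreover have "(real j - real e) * real d * real l ^ K \<in> \<int>" by simp
    ultimately have "v * real d * real l ^ (K + c) \<in> \<int>" using K by (simp add: Ints_mult_pow)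
    then show ?case by blast
  qed
qed


lemma step:
  assumes vV: "v \<in> V" and xy: "(x,y) \<in> P" and wdef: "w = piL l n a (v * x + y)" and vw: "v < w"
  shows "real (hL d l v) + 1 \<le> real (n+1) * (w - v) / \<tau> + real (hL d l w)"
proof -
  obtain i j0 where ij: "i \<le> n" "x = real l ^ i" "y = real j0" using P_nat[OF xy] by metis
  define q where "q = v * x + y"
  have fw: "fL w = q" unfolding wdef q_def by (rule f_pi)
  define Mw where "Mw = {z\<in>P. w * fst z + snd z = fL w}"
  have Mwfin: "finite Mw" unfolding Mw_def using P_fin by simp
  obtain z0 where z0: "z0 \<in> P" "fL w = w * fst z0 + snd z0" using f_ex by (metis fst_conv snd_conv)
  have "z0 \<in> Mw" unfolding Mw_def using z0 by simp
  then have Mwne: "Mw \<noteq> {}" by auto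
  define xc where "xc = Max (fst ` Mw)"
  have "xc \<in> fst ` Mw" unfolding xc_def using Mwfin Mwne by simp
  then obtain e where ce: "(xc, e) \<in> Mw" by force
  have cP: "(xc, e) \<in> P" and we: "w * xc + e = q" using ce fw unfolding Mw_def by auto
  have xcmax: "fst z \<le> xc" if "z \<in> Mw" for z unfolding xc_def using Mwfin that by simp
  obtain c e0 where ce0: "c \<le> n" "xc = real l ^ c" "e = real e0" using P_nat[OF cP] by metis
  obtain K where K: "v * real d * real l ^ K \<in> \<int>" using V_Z[OF vV] by blast
  have lpos: "real l > 0" and lge2: "real l \<ge> 2" using l2 by auto
  have xcpos: "xc > 0" using ce0 lpos by simp
  have weq: "w * real l ^ c = v * real l ^ i + (real j0 - real e0)"
    using we ij ce0 unfolding q_def by simp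
  have zI: "real j0 - real e0 \<in> \<int>" by simp
  have tpos: "\<tau> > 0" by (rule tau_pos)
  have t1: "\<tau> \<le> 1 / (real d * real l ^ n)" by (rule tau_le1)
  have dpos: "real d > 0" using d1 by simp
  define \<Delta> where "\<Delta> = w - v"
  have Dpos: "\<Delta> > 0" using vw \<Delta>_def by simp
  have hw_ge: "hL d l v \<le> hL d l w + i"
  proof (cases "i + 1 \<le> hL d l v")
    case True
    from h_step[OF K weq zI True] l2 show ?thesis by simp
  next
    case False then show ?thesis by simp
  qed
  have big: "1 / (real d * real l ^ n) \<le> \<Delta> \<Longrightarrow> \<tau> \<le> \<Delta>" using t1 by simp
  have lnle: "real l ^ c \<le> real l ^ n" if "c \<le> n" for c using that l2 by (intro power_increasing) auto
  show ?thesis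
  proof (cases "\<tau> \<le> \<Delta>")
    case True
    have "real (n+1) * 1 \<le> real (n+1) * (\<Delta> / \<tau>)" using True tpos by (intro mult_left_mono) auto
    then have "real (n+1) \<le> real (n+1) * \<Delta> / \<tau>" by simp
    moreover have "real (hL d l v) \<le> real (hL d l w) + real n" using hw_ge ij(1) by linarith
    ultimately show ?thesis unfolding \<Delta>_def by simp
  next
    case False
    then have small: "\<Delta> < \<tau>" by simp
    have nope: "\<not> (1 / (real d * real l ^ n) \<le> \<Delta>)" using big small by linarith
    have nope2: False if "1 / (real d * real l ^ c') \<le> \<Delta>" "c' \<le> n" for c'
    proof -
      have "real d * real l ^ c' \<le> real d * real l ^ n" using lnle[OF that(2)] dpos by simp
      then have "1 / (real d * real l ^ n) \<le> 1 / (real d * real l ^ c')" using dpos lpos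
        by (intro divide_left_mono) auto
      then show False using nope that(1) by linarith
    qed
    consider "i = c" | "i < c" | "c < i" by linarith
    then show ?thesis
    proof cases
      case 1
      then have "\<Delta> * real l ^ c = real j0 - real e0" using weq unfolding \<Delta>_def by (simp add: algebra_simps)
      moreover have "\<Delta> * real l ^ c > 0" using Dpos lpos by simp
      ultimately have "1 \<le> \<Delta> * real l ^ c" using Ints_pos_ge1[OF zI] by simp
      then have A: "1 / real l ^ c \<le> \<Delta>" using lpos by (simp add: divide_le_eq mult.commute)
      have "real l ^ c \<le> real d * real l ^ c" using d1 lpos by simp
      then have "1 / (real d * real l ^ c) \<le> 1 / real l ^ c" using lpos dpos
        by (intro divide_left_mono) auto
      then have "1 / (real d * real l ^ c) \<le> \<Delta>" using A by linarith
      then show ?thesis using nope2 ce0(1) by blast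
    next
      case 2
      show ?thesis
      proof (cases "i + 1 \<le> hL d l v")
        case True
        have "hL d l v + c \<le> hL d l w + i" using h_step[OF K weq zI True] l2 by simp
        then have "real (hL d l v) + 1 \<le> real (hL d l w)" using 2 by linarith
        moreover have "0 \<le> real (n+1) * (w - v) / \<tau>" using vw tpos by simp
        ultimately show ?thesis by simp
      next
        case False
        then have "hL d l v \<le> i" by simp
        then have Zi: "v * real d * real l ^ i \<in> \<int>" using hL_mono[OF K] by blast
        have "real d * real l ^ c * \<Delta> = real d * (w * real l ^ c) - real d * v * real l ^ c"
          unfolding \<Delta>_def by (simp add: algebra_simps)
        also have "\<dots> = real d * (v * real l ^ i + (real j0 - real e0)) - real d * v * (real l ^ i * real l ^ (c - i))"
        proof -
          have pc: "real l ^ c = real l ^ i * real l ^ (c - i)" using 2 by (simp flip: power_add)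
          show ?thesis unfolding weq by (simp only: pc[symmetric])
        qed
        also have "\<dots> = (v * real d * real l ^ i) + real d * (real j0 - real e0) - (v * real d * real l ^ i) * real l ^ (c - i)"
          by (simp add: algebra_simps)
        finally have eqD: "real d * real l ^ c * \<Delta> = (v * real d * real l ^ i) + real d * (real j0 - real e0) - (v * real d * real l ^ i) * real l ^ (c - i)" .
        have I1: "(v * real d * real l ^ i) * real l ^ (c - i) \<in> \<int>" using Zi by (rule Ints_mult_pow)
        have I2: "real d * (real j0 - real e0) \<in> \<int>" by simp
        have "real d * real l ^ c * \<Delta> \<in> \<int>" unfolding eqD
          by (rule Ints_diff[OF Ints_add[OF Zi I2] I1])
        moreover have "real d * real l ^ c * \<Delta> > 0" using dpos lpos Dpos by simp
        ultimately have "1 \<le> real d * real l ^ c * \<Delta>" by (rule Ints_pos_ge1)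
        then have "1 / (real d * real l ^ c) \<le> \<Delta>" using dpos lpos
          by (simp add: divide_le_eq mult.commute)
        then show ?thesis using nope2 ce0(1) by blast
      qed
    next
      case 3
      define R where "R = {z\<in>P. xc < fst z}"
      have Rfin: "finite R" unfolding R_def using P_fin by simp
      have xgt: "xc < x" using 3 ij ce0 l2 by (simp add: power_strict_increasing)
      have xR: "(x,y) \<in> R" unfolding R_def using xy xgt by simp
      define tz where "tz z = (e - snd z) / (fst z - xc)" for z :: "real \<times> real"
      define \<beta> where "\<beta> = Max (tz ` R)"
      have Rne: "R \<noteq> {}" using xR by auto
      have tzle: "tz z \<le> \<beta>" if "z \<in> R" for z unfolding \<beta>_def using Rfin that by simp
      have "\<beta> \<in> tz ` R" unfolding \<beta>_def using Rfin Rne by (intro Max_in) auto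
      then obtain zs where zs: "zs \<in> R" "tz zs = \<beta>" by (metis imageE)
      have tzw: "tz z \<le> w" if "z \<in> R" for z
      proof -
        have zP: "z \<in> P" and zx: "xc < fst z" using that unfolding R_def by auto
        have "fL w \<le> w * fst z + snd z" using f_le[of "fst z" "snd z" w] zP by simp
        then have "e - snd z \<le> w * (fst z - xc)" using we fw by (simp add: algebra_simps)
        then show ?thesis unfolding tz_def using zx by (simp add: divide_le_eq mult.commute)
      qed
      have bw: "\<beta> \<le> w" using tzw[OF zs(1)] zs(2) by simp
      have supp: "\<beta> * xc + e \<le> \<beta> * fst z + snd z" if zP: "z \<in> P" for z
      proof (cases "xc < fst z")
        case True
        then have "tz z \<le> \<beta>" using tzle zP unfolding R_def by simp
        then have "e - snd z \<le> \<beta> * (fst z - xc)" unfolding tz_def using True by (simp add: divide_le_eq mult.commute)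
        then show ?thesis by (simp add: algebra_simps)
      next
        case False
        have "fL w \<le> w * fst z + snd z" using f_le[of "fst z" "snd z" w] zP by simp
        then have A: "w * xc + e \<le> w * fst z + snd z" using we fw by simp
        have "(w - \<beta>) * fst z \<le> (w - \<beta>) * xc" using False bw by (intro mult_left_mono) auto
        then show ?thesis using A by (simp add: algebra_simps)
      qed
      have zsP: "zs \<in> P" and zsx: "xc < fst zs" using zs unfolding R_def by auto
      have zseq: "\<beta> * fst zs + snd zs = \<beta> * xc + e"
        using zs(2) zsx unfolding tz_def by (simp add: field_simps)
      have fb: "fL \<beta> = \<beta> * xc + e"
      proof -
        have "\<beta> * xc + e \<le> fL \<beta>" unfolding f_ge_iff using supp by auto
        moreover have "fL \<beta> \<le> \<beta> * xc + e" using f_le[OF cP] .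
        ultimately show ?thesis by simp
      qed
      have slope: "-\<beta> \<in> slopesL l n a"
        using breakpoint_slope[of xc e "fst zs" "snd zs" \<beta>] cP zsP zsx fb zseq by simp
      have dbI: "real d * \<beta> \<in> \<int>"
      proof -
        have "real d * (-\<beta>) \<in> \<int>" using dint slope by blast
        then have "- (real d * (-\<beta>)) \<in> \<int>" by (rule Ints_minus)
        then show ?thesis by simp
      qed
      have blw: "\<beta> < w"
      proof (rule ccontr)
        assume "\<not> \<beta> < w"
        then have "\<beta> = w" using bw by simp
        then have "zs \<in> Mw" unfolding Mw_def using zsP zseq we fw by simp
        then have "fst zs \<le> xc" by (rule xcmax)
        then show False using zsx by simp
      qed
      have wV: "w \<in> V" unfolding wdef using V_step[OF vV xy] .
      show ?thesis
      proof (cases "v < \<beta>")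
        case True
        have "\<beta> + \<tau> \<le> w" using gap[OF slope wV blw] .
        then have "\<tau> \<le> \<Delta>" using True unfolding \<Delta>_def by simp
        then show ?thesis using small by simp
      next
        case False
        then have bv: "\<beta> \<le> v" by simp
        define \<phi> where "\<phi> t = t * x + y - t * xc - e" for t
        have phib: "0 \<le> \<phi> \<beta>" using supp[OF xy] unfolding \<phi>_def by simp
        have phiv: "\<phi> v = xc * \<Delta>" unfolding \<phi>_def \<Delta>_def using we unfolding q_def by (simp add: algebra_simps)
        have phidiff: "\<phi> v = \<phi> \<beta> + (v - \<beta>) * (x - xc)" unfolding \<phi>_def by (simp add: algebra_simps)
        have "x \<ge> real l * xc"
        proof -
          have "real l ^ (c + 1) \<le> real l ^ i" using 3 l2 by (intro power_increasing) auto
          then show ?thesis using ij ce0 by (simp add: mult.commute)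
        qed
        moreover have "2 * xc \<le> real l * xc" using lge2 xcpos by (intro mult_right_mono) auto
        ultimately have x2: "x - xc \<ge> xc" by linarith
        show ?thesis
        proof (cases "\<beta> < v")
          case True
          have "\<beta> + \<tau> \<le> v" using gap[OF slope vV True] .
          have "(v - \<beta>) * xc \<le> (v - \<beta>) * (x - xc)" using x2 bv by (intro mult_left_mono) auto
          then have "(v - \<beta>) * xc \<le> xc * \<Delta>" using phiv phidiff phib by linarith
          then have "v - \<beta> \<le> \<Delta>" using xcpos by (simp add: mult.commute)
          then have "\<tau> \<le> \<Delta>" using \<open>\<beta> + \<tau> \<le> v\<close> by simp
          then show ?thesis using small by simp
        next
          case False
          then have vb: "v = \<beta>" using bv by simp
          have "real d * \<phi> v = (real d * \<beta>) * (real l ^ i - real l ^ c) + real d * (real j0 - real e0)"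
            unfolding \<phi>_def vb using ij ce0 by (simp add: algebra_simps)
          moreover have "real l ^ i - real l ^ c \<in> \<int>" by (intro Ints_diff) (simp_all add: Ints_power)
          ultimately have "real d * \<phi> v \<in> \<int>" using dbI by (simp add: Ints_mult Ints_add)
          moreover have "real d * \<phi> v > 0" using phiv xcpos Dpos dpos by simp
          ultimately have "1 \<le> real d * \<phi> v" by (rule Ints_pos_ge1)
          then have "1 \<le> real d * xc * \<Delta>" using phiv by (simp add: mult.assoc)
          then have "1 / (real d * real l ^ c) \<le> \<Delta>" using dpos xcpos ce0
            by (simp add: divide_le_eq mult.commute)
          then show ?thesis using nope2 ce0(1) by blast
        qed
      qed
    qed
  qed
qed

end


theorem mainTheorem10:
  fixes a :: "nat \<Rightarrow> 'a::field poly" and l n d M :: nat and v :: "nat \<Rightarrow> real"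
  assumes "l \<ge> 2" and "n \<ge> 1" and "a 0 \<noteq> 0" and "a n \<noteq> 0"
    and "d \<ge> 1" and "\<forall>\<mu>\<in>slopesL l n a. real d * \<mu> \<in> \<int>"
    and "\<forall>i\<le>M. v i \<in> VsetL l n a"
    and "\<forall>i<M. v i < v (Suc i)"
    and "\<forall>i<M. v (Suc i) \<in> piL l n a ` PsiL l n a (v i)"
  shows "real M \<le> real (n + 1) * (v M + Max (slopesL l n a)) / tauL d l n a + real (hL d l (v M))"
proof -
  interpret NPLd l n a d using assms(1-6) by unfold_locales auto
  define \<Phi> where "\<Phi> u = real (n+1) * u / tauL d l n a + real (hL d l u)" for u
  have tpos: "tauL d l n a > 0" by (rule tau_pos)
  have ind: "\<Phi> (v 0) + real k \<le> \<Phi> (v k)" if "k \<le> M" for k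
    using that
  proof (induction k)
    case 0 then show ?case by simp
  next
    case (Suc k)
    then have kM: "k < M" by simp
    have vk: "v k \<in> VsetL l n a" using assms(7) kM by simp
    have "v (Suc k) \<in> piL l n a ` PsiL l n a (v k)" using assms(9) kM by simp
    then obtain x y where xy: "(x,y) \<in> ptsL l n a" "v (Suc k) = piL l n a (v k * x + y)"
      unfolding Psi_eq by auto
    have lt: "v k < v (Suc k)" using assms(8) kM by simp
    have st: "real (hL d l (v k)) + 1 \<le> real (n+1) * (v (Suc k) - v k) / tauL d l n a + real (hL d l (v (Suc k)))"
      by (rule step[OF vk xy(1) xy(2) lt])
    have "real (n+1) * (v (Suc k) - v k) / tauL d l n a = real (n+1) * v (Suc k) / tauL d l n a - real (n+1) * v k / tauL d l n a"
      by (simp add: right_diff_distrib diff_divide_distrib)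
    then have "\<Phi> (v k) + 1 \<le> \<Phi> (v (Suc k))" using st unfolding \<Phi>_def by linarith
    then show ?case using Suc.IH Suc.prems by simp
  qed
  have A: "\<Phi> (v 0) + real M \<le> \<Phi> (v M)" using ind by simp
  have v0: "- Max (slopesL l n a) \<le> v 0" using V_ge assms(7) by simp
  have "real (n+1) * (- v 0) \<le> real (n+1) * Max (slopesL l n a)" using v0 by (intro mult_left_mono) auto
  then have B: "real (n+1) * (- v 0) / tauL d l n a \<le> real (n+1) * Max (slopesL l n a) / tauL d l n a"
    using tpos by (intro divide_right_mono) auto
  have C: "real (n + 1) * (v M + Max (slopesL l n a)) / tauL d l n a
      = real (n+1) * v M / tauL d l n a + real (n+1) * Max (slopesL l n a) / tauL d l n a"
    by (simp add: distrib_left add_divide_distrib)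
  have D: "real (n+1) * (- v 0) / tauL d l n a = - (real (n+1) * v 0 / tauL d l n a)" by simp
  show ?thesis using A B C D unfolding \<Phi>_def by linarith
qed

end
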